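(* Let $a,b,c$ be non-constant polynomials in $\mathbb{F}_2[t]$ and let $\boldsymbol{\varepsilon}=(a,b,c)^\infty$, i.e. $\varepsilon_{3m}=a$, $\varepsilon_{3m+1}=b$, $\varepsilon_{3m+2}=c$ for $m\geq 0$. Let $\beta=1/CF(\mathbf{s}(\boldsymbol{\varepsilon}))$. Then $$\beta^8=A+B_0\beta+B_1\beta^2+B_2\beta^4,$$ where $A,B_0,B_1,B_2\in\mathbb{F}_2[t]$ are $$A=a^3b^2c + a^2b^2c^2 + ab^3c^2 + b^4c^2 + ab^2c^3 + abc^4 + a^2bc + ab^2c + abc^2 + c^4 + 1,$$ $$B_0= a^4b^2c + a^3b^2c^2 + a^2b^3c^2 + ab^4c^2 + a^2b^2c^3 + a^2bc^4,$$ $$B_1=a^3b^2c + a^2b^2c^2 + ab^3c^2 + a^2bc^3,$$ $$B_2=a^2bc + ab^2c + abc^2.$$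
   Context: Given a sequence $\boldsymbol{\varepsilon}=(\varepsilon_n)_{n\geq 0}$, define words $W_0=$ empty word and $W_{n+1}=W_n\,\varepsilon_n\,W_n$ (concatenation) for $n\geq 0$; $\mathbf{s}(\boldsymbol{\varepsilon})=(s_i)_{i\geq 0}$ is the infinite word beginning with every $W_n$, i.e. $\varepsilon_0\varepsilon_1\varepsilon_0\varepsilon_2\varepsilon_0\varepsilon_1\varepsilon_0\varepsilon_3\cdots$. $CF(\mathbf{s}(\boldsymbol{\varepsilon}))=[s_0,s_1,\dots]=s_0+1/(s_1+1/(s_2+\cdots))$ is the infinite continued fraction in $\mathbb{F}_2((1/t))$ with these partial quotients. *)

theory Defs
  imports "HOL-Computational_Algebra.Computational_Algebra" "HOL-Library.Z2"
begin

(* F_2 is the type bit; F_2[t] is bit poly; F_2((1/t)) is bit fls, the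
   Laurent series in the variable X = 1/t (with the X-adic metric topology
   from the library, i.e. the usual 1/t-adic topology). *)

definition tpoly_to_fls :: "bit poly \<Rightarrow> bit fls" where
  "tpoly_to_fls p = (\<Sum>i\<le>degree p. fls_const (coeff p i) * fls_X_inv ^ i)"

fun W :: "(nat \<Rightarrow> 'a) \<Rightarrow> nat \<Rightarrow> 'a list" where
  "W eps 0 = []"
| "W eps (Suc n) = W eps n @ [eps n] @ W eps n"

(* the infinite word beginning with every W_n; W_{i+1} has length 2^(i+1)-1 > i *)
definition sword :: "(nat \<Rightarrow> 'a) \<Rightarrow> nat \<Rightarrow> 'a" where
  "sword eps i = W eps (Suc i) ! i"

fun cf_fin :: "'a::field list \<Rightarrow> 'a" where
  "cf_fin [] = 0"
| "cf_fin [x] = x"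
| "cf_fin (x # xs) = x + 1 / cf_fin xs"

definition convergents :: "(nat \<Rightarrow> 'a::field) \<Rightarrow> nat \<Rightarrow> 'a" where
  "convergents s n = cf_fin (map s [0..<Suc n])"

definition CF :: "(nat \<Rightarrow> bit fls) \<Rightarrow> bit fls" where
  "CF s = lim (convergents s)"

end

theory Submission
  imports Defs
begin

unbundle fps_syntax

lemma two_poly: "(2::bit poly) = 0"
proof -
  have "(2::bit poly) = [:2:]" by (simp add: numeral_poly)
  then show ?thesis by simp
qed

lemma two_fls: "(2::bit fls) = 0"
proof -
  have "(2::bit fls) = fls_const (2::bit)" by (simp only: fls_const_numeral)
  then show ?thesis by simp
qed

lemma fls_add_self: "(x::bit fls) + x = 0"
  by (metis mult_2 two_fls mult_zero_left)

lemma fls_neg: "-(x::bit fls) = x"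
  by (metis add.inverse_unique fls_add_self)

lemma fls_minus: "(x::bit fls) - y = x + y"
  by (metis diff_conv_add_uminus fls_neg)

lemma frob: "((x::bit fls) + y)^2 = x^2 + y^2"
proof -
  have "(x+y)^2 = x^2 + y^2 + 2*(x*y)" by (simp add: power2_sum)
  then show ?thesis by (simp add: two_fls)
qed

lemma frob4: "((x::bit fls) + y)^4 = x^4 + y^4"
proof -
  have "(x+y)^4 = ((x+y)^2)^2" by (simp flip: power_mult)
  also have "\<dots> = (x^2)^2 + (y^2)^2" by (simp add: frob)
  finally show ?thesis by (simp flip: power_mult)
qed

lemma frob8: "((x::bit fls) + y)^8 = x^8 + y^8"
proof -
  have "(x+y)^8 = ((x+y)^4)^2" by (simp flip: power_mult)
  also have "\<dots> = (x^4)^2 + (y^4)^2" by (simp add: frob4 frob)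
  also have "\<dots> = x^8 + y^8" by (simp flip: power_mult)
  finally show ?thesis .
qed

abbreviation phi where "phi \<equiv> tpoly_to_fls"

lemma phi_nth: "tpoly_to_fls p $$ k = (if k \<le> 0 then coeff p (nat (-k)) else 0)"
proof -
  have 1: "tpoly_to_fls p $$ k = (\<Sum>i\<le>degree p. coeff p i * (if k = - int i then 1 else 0))"
    unfolding tpoly_to_fls_def fls_nth_sum by simp
  show ?thesis
  proof (cases "k \<le> 0")
    case True
    have "(\<Sum>i\<le>degree p. coeff p i * (if k = - int i then 1 else 0))
        = (\<Sum>i\<le>degree p. if i = nat (-k) then coeff p i else 0)"
      by (rule sum.cong) (use True in auto)
    also have "\<dots> = (if nat (-k) \<in> {..degree p} then coeff p (nat (-k)) else 0)"
      by (simp add: sum.delta)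
    also have "\<dots> = coeff p (nat (-k))" by (auto simp: coeff_eq_0)
    finally show ?thesis using 1 True by simp
  next
    case False
    then show ?thesis using 1 by (auto intro!: sum.neutral)
  qed
qed

lemma phi_add: "phi (p + q) = phi p + phi q"
  by (rule fls_eqI) (simp add: phi_nth)

lemma phi_0: "phi 0 = 0"
  by (rule fls_eqI) (simp add: phi_nth)

lemma phi_1: "phi 1 = 1"
  by (rule fls_eqI) (auto simp: phi_nth coeff_1)

lemma phi_const: "phi [:c:] = fls_const c"
  by (rule fls_eqI) (auto simp: phi_nth coeff_pCons')

lemma phi_smult: "phi (smult c q) = fls_const c * phi q"
  by (rule fls_eqI) (simp add: phi_nth)

lemma phi_pCons0: "phi (pCons 0 r) = fls_X_inv * phi r"
proof (rule fls_eqI)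
  fix k
  show "phi (pCons 0 r) $$ k = (fls_X_inv * phi r) $$ k"
  proof (cases "k < 0")
    case True
    then have "nat (-k) = Suc (nat (-k - 1))" by simp
    then show ?thesis using True by (simp add: phi_nth fls_X_inv_times_conv_shift)
  next
    case False
    then show ?thesis by (auto simp: phi_nth fls_X_inv_times_conv_shift)
  qed
qed

lemma phi_pCons: "phi (pCons c p) = fls_const c + fls_X_inv * phi p"
proof -
  have "pCons c p = [:c:] + pCons 0 p" by simp
  then show ?thesis by (simp only: phi_add phi_const phi_pCons0)
qed

lemma phi_mult: "phi (p * q) = phi p * phi q"
proof (induction p)
  case 0
  then show ?case by (simp add: phi_0)
next
  case (pCons c p)
  have "phi (pCons c p * q) = phi (smult c q + pCons 0 (p * q))" by simp
  also have "\<dots> = fls_const c * phi q + fls_X_inv * (phi p * phi q)"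
    by (simp only: phi_add phi_smult phi_pCons0 pCons.IH)
  also have "\<dots> = phi (pCons c p) * phi q"
    by (simp add: phi_pCons algebra_simps)
  finally show ?case .
qed

lemma phi_power: "phi (p ^ n) = phi p ^ n"
  by (induction n) (simp_all add: phi_1 phi_mult)

lemma phi_eq0: "phi p = 0 \<longleftrightarrow> p = 0"
proof
  assume h: "phi p = 0"
  have "coeff p n = 0" for n
  proof -
    have "phi p $$ (- int n) = 0" using h by simp
    then show ?thesis by (simp add: phi_nth)
  qed
  then show "p = 0" by (simp add: poly_eqI)
qed (simp add: phi_0)

lemma phi_subdeg: "p \<noteq> 0 \<Longrightarrow> fls_subdegree (phi p) = - int (degree p)"
  by (rule fls_subdegree_eqI) (auto simp: phi_nth coeff_eq_0)

definition sd_ge :: "bit fls \<Rightarrow> int \<Rightarrow> bool" where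
  "sd_ge x k \<longleftrightarrow> (\<forall>j<k. x $$ j = 0)"

lemma sd_ge_add: "sd_ge x k \<Longrightarrow> sd_ge y k \<Longrightarrow> sd_ge (x + y) k"
  by (simp add: sd_ge_def)

lemma sd_ge_diff: "sd_ge x k \<Longrightarrow> sd_ge y k \<Longrightarrow> sd_ge (x - y) k"
  by (simp add: sd_ge_def)

lemma sd_ge_uminus: "sd_ge x k \<Longrightarrow> sd_ge (-x) k"
  by (simp add: sd_ge_def)

lemma sd_ge_mono: "sd_ge x k \<Longrightarrow> k' \<le> k \<Longrightarrow> sd_ge x k'"
  by (simp add: sd_ge_def)

lemma sd_ge_0: "sd_ge 0 k"
  by (simp add: sd_ge_def)

lemma sd_ge_subdeg: "sd_ge x (fls_subdegree x)"
  by (simp add: sd_ge_def)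

lemma sd_ge_subdeg_le: "sd_ge x k \<Longrightarrow> x \<noteq> 0 \<Longrightarrow> k \<le> fls_subdegree x"
  by (metis fls_subdegree_geI sd_ge_def)

lemma sd_ge_mult: "sd_ge x k \<Longrightarrow> sd_ge y l \<Longrightarrow> sd_ge (x * y) (k + l)"
proof -
  assume a: "sd_ge x k" "sd_ge y l"
  show ?thesis
  proof (cases "x = 0 \<or> y = 0")
    case True then show ?thesis by (auto simp: sd_ge_0)
  next
    case False
    then have "fls_subdegree (x*y) = fls_subdegree x + fls_subdegree y" by simp
    moreover have "k \<le> fls_subdegree x" "l \<le> fls_subdegree y"
      using a False sd_ge_subdeg_le by auto
    ultimately show ?thesis
      using sd_ge_subdeg[of "x*y"] sd_ge_mono by fastforce
  qed
qed

lemma sd_ge_power: "sd_ge x k \<Longrightarrow> sd_ge (x ^ n) (int n * k)"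
proof (induction n)
  case 0 then show ?case by (simp add: sd_ge_def)
next
  case (Suc n)
  then have "sd_ge (x * x ^ n) (k + int n * k)" by (intro sd_ge_mult) auto
  then show ?case by (simp add: algebra_simps)
qed

lemma sd_ge_all: "(\<And>k. sd_ge x k) \<Longrightarrow> x = 0"
proof (rule fls_eqI)
  fix n assume "\<And>k. sd_ge x k"
  then have "sd_ge x (n+1)" by blast
  then show "x $$ n = 0 $$ n" by (simp add: sd_ge_def)
qed

lemma sd_ge_phi: "sd_ge (phi p) (- int (degree p))"
proof (cases "p = 0")
  case False
  then show ?thesis using sd_ge_subdeg[of "phi p"] phi_subdeg[of p] by simp
qed (simp add: phi_0 sd_ge_0)

lemma subdeg_add_small: "sd_ge y k \<Longrightarrow> x \<noteq> 0 \<Longrightarrow> fls_subdegree x < k \<Longrightarrow> fls_subdegree (x + y) = fls_subdegree x"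
proof (cases "y = 0")
  case False
  assume "sd_ge y k" "x \<noteq> 0" "fls_subdegree x < k"
  then show ?thesis using False sd_ge_subdeg_le[of y k] by (intro fls_subdegree_add_eq1) auto
qed simp


lemma telescope:
  assumes d: "\<And>n. sd_ge (f (Suc n) - f n) (int n)"
  shows "n \<le> m \<Longrightarrow> sd_ge (f m - f n) (int n)"
proof (induction m rule: dec_induct)
  case base then show ?case by (simp add: sd_ge_0)
next
  case (step m)
  have "f (Suc m) - f n = (f (Suc m) - f m) + (f m - f n)" by simp
  moreover have "sd_ge (f (Suc m) - f m) (int n)" using d[of m] step(1) sd_ge_mono by simp
  ultimately show ?case using step(3) sd_ge_add by metis
qed

lemma fls_conv:
  fixes f :: "nat \<Rightarrow> bit fls"
  assumes d: "\<And>n. sd_ge (f (Suc n) - f n) (int n)"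
  shows "\<exists>L. f \<longlonglongrightarrow> L \<and> (\<forall>n. sd_ge (L - f n) (int n))"
proof -
  have agree: "f m $$ j = f n $$ j" if "j < int n" "j < int m" for m n j
  proof -
    { fix m n :: nat assume "n \<le> m" "j < int n"
      then have "(f m - f n) $$ j = 0" using telescope[OF d, of n m] by (simp add: sd_ge_def)
      then have "f m $$ j = f n $$ j" by (metis fls_minus_nth right_minus_eq) }
    then show ?thesis using that by (cases "n \<le> m") (auto, metis nat_le_linear)
  qed
  obtain N0 where N0: "\<forall>j<N0. f 0 $$ j = 0" by (elim fls_nth_vanishes_belowE)
  define g where "g j = f (nat j + 1) $$ j" for j
  have "\<forall>j<min N0 0. g j = 0"
  proof (intro allI impI)
    fix j assume "j < min N0 0"
    then have "g j = f 0 $$ j" unfolding g_def by (intro agree) auto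
    then show "g j = 0" using N0 \<open>j < min N0 0\<close> by simp
  qed
  then have L: "Abs_fls g $$ j = g j" for j by (rule nth_Abs_fls_lower_bound)
  define L where "L = Abs_fls g"
  have sdL: "sd_ge (L - f n) (int n)" for n
    unfolding sd_ge_def
  proof (intro allI impI)
    fix j assume "j < int n"
    have "g j = f n $$ j" unfolding g_def by (rule agree) (use \<open>j < int n\<close> in auto)
    then show "(L - f n) $$ j = 0" by (simp add: L_def L)
  qed
  have "f \<longlonglongrightarrow> L"
  proof (rule metric_LIMSEQ_I)
    fix r :: real assume "0 < r"
    obtain n0 where n0: "(1/2::real)^n0 < r" using real_arch_pow_inv[OF \<open>0 < r\<close>, of "1/2"] by auto
    have "dist (f n) L < r" if "n \<ge> n0" for n
    proof (cases "f n = L")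
      case True then show ?thesis using \<open>0 < r\<close> by simp
    next
      case False
      have s: "sd_ge (f n - L) (int n)" using sd_ge_uminus[OF sdL[of n]] by simp
      have ne: "f n - L \<noteq> 0" using False by simp
      have k: "int n \<le> fls_subdegree (f n - L)" using sd_ge_subdeg_le[OF s ne] .
      then have "dist (f n) L = inverse (2 ^ nat (fls_subdegree (f n - L)))"
        using False by (simp add: dist_fls_def)
      also have "\<dots> \<le> inverse (2 ^ n)"
        using k by (intro le_imp_inverse_le) (auto intro: power_increasing)
      also have "\<dots> = (1/2)^n" by (simp add: power_one_over inverse_eq_divide)
      also have "\<dots> \<le> (1/2)^n0" using that by (intro power_decreasing) auto
      finally show ?thesis using n0 by simp
    qed
    then show "\<exists>no. \<forall>n\<ge>no. dist (f n) L < r" by blast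
  qed
  then show ?thesis using sdL by blast
qed


type_synonym m4 = "bit poly \<times> bit poly \<times> bit poly \<times> bit poly"

fun mmul :: "m4 \<Rightarrow> m4 \<Rightarrow> m4" where
  "mmul (a,b,c,d) (e,f,g,h) = (a*e+b*g, a*f+b*h, c*e+d*g, c*f+d*h)"

fun mat :: "bit poly list \<Rightarrow> m4" where
  "mat [] = (1,0,0,1)"
| "mat (x#xs) = mmul (x,1,1,0) (mat xs)"

lemma mmul_assoc: "mmul (mmul A B) C = mmul A (mmul B C)"
  by (cases A, cases B, cases C) (simp add: algebra_simps)

lemma mmul_id: "mmul (1,0,0,1) A = A"
  by (cases A) simp

lemma mat_append: "mat (xs @ ys) = mmul (mat xs) (mat ys)"
  by (induction xs) (simp_all add: mmul_id mmul_assoc)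

lemma mat_single: "mat [y] = (y,1,1,0)"
  by simp

lemma mat_cons: "mat xs = (p,p',q,q') \<Longrightarrow> mat (x#xs) = (x*p+q, x*p'+q', p, p')"
  by simp

lemma mat_inv:
  "xs \<noteq> [] \<Longrightarrow> (\<forall>x\<in>set xs. degree x > 0) \<Longrightarrow> mat xs = (p,p',q,q') \<Longrightarrow>
   p \<noteq> 0 \<and> q \<noteq> 0 \<and> degree p \<ge> length xs \<and> degree q + 1 \<ge> length xs \<and>
   degree q < degree p \<and> degree p' < degree p \<and> degree q' \<le> degree q"
proof (induction xs arbitrary: p p' q q')
  case Nil then show ?case by simp
next
  case (Cons x xs)
  show ?case
  proof (cases "xs = []")
    case True
    then show ?thesis using Cons by auto
  next
    case False
    obtain P P' Q Q' where m: "mat xs = (P,P',Q,Q')" by (cases "mat xs") auto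
    have IH: "P \<noteq> 0 \<and> Q \<noteq> 0 \<and> degree P \<ge> length xs \<and> degree Q + 1 \<ge> length xs \<and>
   degree Q < degree P \<and> degree P' < degree P \<and> degree Q' \<le> degree Q"
      using Cons.IH[OF False _ m] Cons.prems(2) by auto
    have eqs: "p = x*P+Q" "p' = x*P'+Q'" "q = P" "q' = P'" using Cons.prems(3) m by auto
    have dx: "degree x > 0" using Cons.prems(2) by auto
    then have x0: "x \<noteq> 0" by auto
    have dxP: "degree (x*P) = degree x + degree P" using x0 IH by (simp add: degree_mult_eq)
    have dp: "degree p = degree x + degree P"
      using eqs(1) dxP IH dx by (simp add: degree_add_eq_left)
    have p0: "p \<noteq> 0" using dp dx by (metis add_gr_0 degree_0 less_numeral_extra(3))
    have dp': "degree p' < degree p"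
    proof -
      have "degree (x*P') \<le> degree x + degree P'" by (rule degree_mult_le)
      then have "degree (x*P') < degree p" using dp IH dx by linarith
      moreover have "degree Q' < degree p" using dp IH dx by linarith
      ultimately show ?thesis using eqs(2) degree_add_le_max[of "x*P'" Q']
        by (metis le_less_trans max_less_iff_conj)
    qed
    show ?thesis using IH eqs dp p0 dp' dx by auto
  qed
qed

lemma mat_det: "mat xs = (p,p',q,q') \<Longrightarrow> p*q' + p'*q = 1"
proof (induction xs arbitrary: p p' q q')
  case Nil then show ?case by simp
next
  case (Cons x xs)
  obtain P P' Q Q' where m: "mat xs = (P,P',Q,Q')" by (cases "mat xs") auto
  have IH: "P*Q' + P'*Q = 1" using Cons.IH[OF m] .
  have eqs: "p = x*P+Q" "p' = x*P'+Q'" "q = P" "q' = P'" using Cons.prems m by auto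
  have "p*q' + p'*q = (P*Q' + P'*Q) + 2*(x*P*P')" unfolding eqs by algebra
  then show ?case using IH by (simp add: two_poly)
qed

lemma cf_mat:
  "xs \<noteq> [] \<Longrightarrow> (\<forall>x\<in>set xs. degree x > 0) \<Longrightarrow> mat xs = (p,p',q,q') \<Longrightarrow>
   cf_fin (map phi xs) = phi p / phi q"
proof (induction xs arbitrary: p p' q q')
  case Nil then show ?case by simp
next
  case (Cons x xs)
  show ?case
  proof (cases "xs = []")
    case True
    then show ?thesis using Cons by (auto simp: phi_1)
  next
    case False
    then obtain y ys where xs: "xs = y # ys" by (cases xs) auto
    obtain P P' Q Q' where m: "mat xs = (P,P',Q,Q')" by (cases "mat xs") auto
    have IH: "cf_fin (map phi xs) = phi P / phi Q" using Cons.IH[OF False _ m] Cons.prems(2) by auto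
    have P0: "P \<noteq> 0" using mat_inv[OF False _ m] Cons.prems(2) by auto
    then have P0': "phi P \<noteq> 0" by (simp add: phi_eq0)
    have eqs: "p = x*P+Q" "q = P" using Cons.prems(3) m by auto
    have "cf_fin (map phi (x#xs)) = phi x + 1 / cf_fin (map phi xs)" using xs by simp
    also have "\<dots> = phi x + phi Q / phi P" using IH by simp
    also have "\<dots> = phi p / phi q" using P0' unfolding eqs by (simp add: phi_add phi_mult field_simps)
    finally show ?thesis .
  qed
qed


lemma W_len: "length (W eps n) = 2^n - 1"
proof (induction n)
  case (Suc n)
  have "(2::nat)^n \<ge> 1" by simp
  then show ?case using Suc by simp
qed simp

lemma W_prefix: "n \<le> m \<Longrightarrow> \<exists>t. W eps m = W eps n @ t"
proof (induction m rule: dec_induct)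
  case (step m)
  then obtain t where "W eps m = W eps n @ t" by blast
  then show ?case by simp
qed simp

lemma W_set: "set (W eps n) \<subseteq> range eps"
  by (induction n) auto

lemma lt_pow: "i < 2 ^ Suc i - (1::nat)"
proof -
  have "i < 2^i" by (rule less_exp)
  then show ?thesis by (simp only: power_Suc)
qed

lemma sword_W: "i < 2^n - 1 \<Longrightarrow> sword eps i = W eps n ! i"
proof -
  assume i: "i < 2^n - 1"
  define M where "M = max n (Suc i)"
  obtain t where t: "W eps M = W eps n @ t" using W_prefix[of n M] M_def by auto
  obtain t' where t': "W eps M = W eps (Suc i) @ t'" using W_prefix[of "Suc i" M] M_def by auto
  have "W eps M ! i = W eps n ! i" using t i by (simp add: nth_append W_len)
  moreover have "W eps M ! i = W eps (Suc i) ! i"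
  proof -
    have len: "i < length (W eps (Suc i))" by (simp only: W_len lt_pow)
    show ?thesis by (simp only: t' nth_append len if_True)
  qed
  ultimately show ?thesis by (simp add: sword_def)
qed

lemma sword_range: "sword eps i \<in> range eps"
proof -
  have len: "i < length (W eps (Suc i))" by (simp only: W_len lt_pow)
  have "W eps (Suc i) ! i \<in> set (W eps (Suc i))" using len by (rule nth_mem)
  then show ?thesis using W_set[of eps "Suc i"] unfolding sword_def by (rule subsetD[rotated])
qed

lemma map_sword_W: "map (sword eps) [0..<2^n - 1] = W eps n"
  by (rule nth_equalityI) (simp_all add: W_len sword_W)

lemma convergents_eq:
  "convergents (\<lambda>i. phi (sword eps i)) n = cf_fin (map phi (map (sword eps) [0..<Suc n]))"
  unfolding convergents_def by (simp add: comp_def)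

lemma conv_mat:
  assumes pos: "\<And>n. degree (eps n) > 0"
  assumes m: "mat (map (sword eps) [0..<Suc n]) = (p,p',q,q')"
  shows "convergents (\<lambda>i. phi (sword eps i)) n = phi p / phi q"
proof -
  have "\<forall>x\<in>set (map (sword eps) [0..<Suc n]). degree x > 0"
  proof
    fix x assume "x \<in> set (map (sword eps) [0..<Suc n])"
    then obtain i where "x = sword eps i" by auto
    then obtain j where "x = eps j" using sword_range[of eps i] by auto
    then show "degree x > 0" using pos by simp
  qed
  then show ?thesis unfolding convergents_eq by (intro cf_mat[OF _ _ m]) simp_all
qed

lemma conv_diff:
  assumes pos: "\<And>n. degree (eps n) > 0"
  shows "sd_ge (convergents (\<lambda>i. phi (sword eps i)) (Suc n) - convergents (\<lambda>i. phi (sword eps i)) n) (int n)"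
proof -
  define xs where "xs = map (sword eps) [0..<Suc n]"
  define y where "y = sword eps (Suc n)"
  have xs': "map (sword eps) [0..<Suc (Suc n)] = xs @ [y]" by (simp add: xs_def y_def)
  have posx: "\<forall>x\<in>set zs. degree x > 0" if zs: "set zs \<subseteq> range (sword eps)" for zs
  proof
    fix x assume "x \<in> set zs"
    then obtain i where "x = sword eps i" using zs by auto
    then obtain j where "x = eps j" using sword_range[of eps i] by auto
    then show "degree x > 0" using pos by simp
  qed
  obtain p p' q q' where m: "mat xs = (p,p',q,q')" by (cases "mat xs") auto
  have m2: "mat (xs @ [y]) = (p*y+p', p, q*y+q', q)"
    by (simp add: mat_append m)
  have inv1: "p \<noteq> 0 \<and> q \<noteq> 0 \<and> degree q + 1 \<ge> length xs"
    using mat_inv[OF _ _ m] posx[of xs] by (auto simp: xs_def)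
  have inv2: "q*y+q' \<noteq> 0"
    using mat_inv[OF _ _ m2] posx[of "xs @ [y]"] by (auto simp: xs_def y_def)
  have c1: "convergents (\<lambda>i. phi (sword eps i)) n = phi p / phi q"
    using conv_mat[OF pos] m by (simp add: xs_def)
  have c2: "convergents (\<lambda>i. phi (sword eps i)) (Suc n) = phi (p*y+p') / phi (q*y+q')"
    by (rule conv_mat[OF pos]) (simp only: xs' m2)
  have det: "p*q' + p'*q = 1" using mat_det[OF m] .
  have key: "(p*y+p')*q + p*(q*y+q') = 1"
  proof -
    have "(p*y+p')*q + p*(q*y+q') = (p*q' + p'*q) + 2*(p*q*y)" by algebra
    then show ?thesis using det by (simp add: two_poly)
  qed
  then have keyF: "phi (p*y+p') * phi q + phi p * phi (q*y+q') = 1"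
    by (metis phi_add phi_mult phi_1)
  have nz: "phi q \<noteq> 0" "phi (q*y+q') \<noteq> 0" using inv1 inv2 by (auto simp: phi_eq0)
  have "phi (p*y+p') / phi (q*y+q') - phi p / phi q
      = (phi (p*y+p') * phi q + phi p * phi (q*y+q')) / (phi (q*y+q') * phi q)"
    using diff_frac_eq[OF nz(2) nz(1), of "phi (p*y+p')" "phi p"] by (simp only: fls_minus)
  also have "\<dots> = inverse (phi (q*y+q') * phi q)" using keyF by (simp add: inverse_eq_divide)
  finally have diff: "convergents (\<lambda>i. phi (sword eps i)) (Suc n) - convergents (\<lambda>i. phi (sword eps i)) n
      = inverse (phi (q*y+q') * phi q)" using c1 c2 by simp
  have sd: "fls_subdegree (inverse (phi (q*y+q') * phi q)) = int (degree (q*y+q')) + int (degree q)"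
    using nz inv1 inv2 by (simp add: phi_subdeg)
  have "int n \<le> int (degree q)" using inv1 by (simp add: xs_def)
  then have "int n \<le> fls_subdegree (inverse (phi (q*y+q') * phi q))" using sd by simp
  then show ?thesis unfolding diff using sd_ge_subdeg sd_ge_mono by blast
qed


fun pqr :: "(nat \<Rightarrow> bit poly) \<Rightarrow> nat \<Rightarrow> bit poly \<times> bit poly \<times> bit poly" where
  "pqr e 0 = (1,0,1)"
| "pqr e (Suc n) = (case pqr e n of (p,q,r) \<Rightarrow> (e n * p^2, e n * p * q + 1, e n * q^2))"

lemma mat_W: "mat (W e n) = (case pqr e n of (p,q,r) \<Rightarrow> (p,q,q,r))"
proof (induction n)
  case 0 then show ?case by simp
next
  case (Suc n)
  obtain p q r where pq: "pqr e n = (p,q,r)" by (cases "pqr e n") auto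
  have m: "mat (W e n) = (p,q,q,r)" using Suc pq by simp
  have det: "p*r + q*q = 1" using mat_det[OF m] .
  have "mat (W e (Suc n)) = mmul (p,q,q,r) (mmul (e n,1,1,0) (p,q,q,r))"
    by (simp only: W.simps mat_append m mat_single)
  also have "\<dots> = (e n * p^2 + 2*(p*q), e n * p * q + (p*r + q*q), e n * p * q + (p*r+q*q), e n * q^2 + 2*(q*r))"
    by (simp add: algebra_simps power2_eq_square)
  also have "\<dots> = (e n * p^2, e n * p * q + 1, e n * p * q + 1, e n * q^2)"
    by (simp add: two_poly det)
  finally show ?case using pq by simp
qed

lemma pqr_p:
  assumes "\<And>n. degree (e n) > 0"
  shows "fst (pqr e n) \<noteq> 0 \<and> degree (fst (pqr e n)) \<ge> n"
proof (induction n)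
  case 0 then show ?case by simp
next
  case (Suc n)
  obtain p q r where pq: "pqr e n = (p,q,r)" by (cases "pqr e n") auto
  have p0: "p \<noteq> 0" "degree p \<ge> n" using Suc pq by auto
  have e0: "e n \<noteq> 0" "degree (e n) \<ge> 1" using assms[of n] by (auto simp: Suc_le_eq)
  have "degree (e n * p^2) = degree (e n) + 2 * degree p"
    using e0 p0 by (simp add: degree_mult_eq degree_power_eq)
  then show ?case using pq p0 e0 by simp
qed

lemma step_alg:
  fixes v ea eb ec bb bc cb cc :: "bit fls"
  assumes "eb \<noteq> 0" "ec \<noteq> 0" "ea \<noteq> 0"
  shows "((cb + bb*eb)*v + cb*(v^2/eb) + cc*((v^2/eb)^2/ec)) + (v^8 + (cb + bb*eb)*v + bb*v^2 + bc*v^4)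
       = (cb + bb*eb)*(v^2/eb) + (cc + bc*eb^2*ec)*((v^2/eb)^2/ec) + (eb^4*ec^2*ea)*(((v^2/eb)^2/ec)^2/ea)
         + 2*((cb + bb*eb)*v)"
  using assms by (simp add: field_simps) (simp add: algebra_simps power2_eq_square)?


lemma invariant:
  fixes e P Q :: "nat \<Rightarrow> bit fls" and A B0 B1 B2 :: "bit fls"
  assumes per: "\<And>n. e (n+3) = e n" and enz: "\<And>n. e n \<noteq> 0"
    and P0: "P 0 = 1" and Q0: "Q 0 = 0" and PS: "\<And>n. P (Suc n) = e n * P n ^2"
    and QS: "\<And>n. Q (Suc n) = e n * P n * Q n + 1"
    and ident: "\<And>N. (e(N+2)^4 * e N^2 * e(N+1) + B2 * e N^2 * e(N+1)) + B1 * e (N+1) = B0"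
    and init: "A = B0 * inverse (P 1) + (e 2^4 * e 0^2 * e 1 + B2 * e 0^2 * e 1) * inverse (P 2)
                   + (e 0^4 * e 1^2 * e 2) * inverse (P 3)"
  shows "(Q N / P N)^8 + A + B0*(Q N / P N) + B1*(Q N / P N)^2 + B2*(Q N / P N)^4
       = B0 * inverse (P (N+1)) + (e(N+2)^4 * e N^2 * e(N+1) + B2 * e N^2 * e(N+1)) * inverse (P (N+2))
         + (e N^4 * e(N+1)^2 * e(N+2)) * inverse (P (N+3))"
proof -
  define u where "u n = inverse (P n)" for n
  define c2 where "c2 N = e(N+2)^4 * e N^2 * e(N+1) + B2 * e N^2 * e(N+1)" for N
  define c3 where "c3 N = e N^4 * e(N+1)^2 * e(N+2)" for N
  define Pf where "Pf x = x^8 + A + B0*x + B1*x^2 + B2*x^4" for x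
  define bs where "bs n = Q n / P n" for n
  have Pnz: "P n \<noteq> 0" for n
    by (induction n) (simp_all add: P0 PS enz)
  have uS: "u (Suc n) = u n ^ 2 / e n" for n
    unfolding u_def PS using enz[of n] Pnz[of n] by (simp add: field_simps power_inverse)
  have bsS: "bs (Suc n) = bs n + u (Suc n)" for n
    unfolding bs_def u_def PS QS using enz[of n] Pnz[of n] by (simp add: field_simps power2_eq_square)
  have Pf_add: "Pf (x + d) = Pf x + (d^8 + B0*d + B1*d^2 + B2*d^4)" for x d
    unfolding Pf_def by (simp add: frob frob4 frob8 algebra_simps)
  have main: "Pf (bs N) = B0 * u (N+1) + c2 N * u (N+2) + c3 N * u (N+3)"
  proof (induction N)
    case 0
    have "bs 0 = 0" by (simp add: bs_def Q0)
    then show ?case using init by (simp add: Pf_def u_def c2_def c3_def numeral_2_eq_2 numeral_3_eq_3)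
  next
    case (Suc N)
    define v where "v = u (N+1)"
    have u2: "u (N+2) = v^2 / e (N+1)" using uS[of "N+1"] by (simp add: v_def)
    have u3: "u (N+3) = (v^2 / e (N+1))^2 / e (N+2)" using uS[of "N+2"] u2 by (simp add: numeral_3_eq_3)
    have u4: "u (N+4) = ((v^2 / e (N+1))^2 / e (N+2))^2 / e N"
      using uS[of "N+3"] u3 per[of N] by (simp add: numeral_3_eq_3 numeral_Bit0)
    have c2S: "c2 (Suc N) = c3 N + B2 * e(N+1)^2 * e(N+2)"
      unfolding c2_def c3_def using per[of N] by (simp add: numeral_3_eq_3 algebra_simps)
    have c3S: "c3 (Suc N) = e(N+1)^4 * e(N+2)^2 * e N"
      unfolding c3_def using per[of N] by (simp add: numeral_3_eq_3)
    have B0eq: "B0 = c2 N + B1 * e (N+1)" using ident[of N] by (simp add: c2_def)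
    have "Pf (bs (Suc N)) = Pf (bs N) + (v^8 + B0*v + B1*v^2 + B2*v^4)"
      using bsS[of N] Pf_add by (simp add: v_def)
    also have "\<dots> = (B0 * v + c2 N * u (N+2) + c3 N * u (N+3)) + (v^8 + B0*v + B1*v^2 + B2*v^4)"
      using Suc by (simp add: v_def)
    also have "\<dots> = B0 * (v^2/e(N+1)) + (c3 N + B2*e(N+1)^2*e(N+2)) * ((v^2/e(N+1))^2/e(N+2))
        + (e(N+1)^4*e(N+2)^2*e N) * (((v^2/e(N+1))^2/e(N+2))^2/e N) + 2*(B0*v)"
    proof -
      note sa = step_alg[where v=v and ea="e N" and eb="e(N+1)" and ec="e(N+2)" and bb=B1 and bc=B2
                   and cb="c2 N" and cc="c3 N", OF enz enz enz]
      show ?thesis unfolding u2 u3 using sa by (simp only: B0eq[symmetric])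
    qed
    also have "\<dots> = B0 * u (Suc N + 1) + c2 (Suc N) * u (Suc N + 2) + c3 (Suc N) * u (Suc N + 3)"
    proof -
      have i: "Suc N + 1 = N+2" "Suc N + 2 = N+3" "Suc N + 3 = N+4" by simp_all
      show ?thesis by (simp only: i u2 u3 u4 c2S c3S two_fls mult_zero_left add_0_right)
    qed
    finally show ?case .
  qed
  then show ?thesis by (simp add: Pf_def u_def c2_def c3_def bs_def)
qed


lemma poly_neg_eq: "(x::bit poly) + y = 0 \<Longrightarrow> x = y"
proof -
  assume h: "x + y = 0"
  have "y + y = 2 * y" by simp
  then have "y + y = 0" by (simp add: two_poly)
  then show "x = y" using h by (metis add_right_cancel)
qed

lemma poly_id1: fixes a b c :: "bit poly" shows "c^4*a^2*b + (a^2*b*c + a*b^2*c + a*b*c^2)*a^2*b + (a^3*b^2*c + a^2*b^2*c^2 + a*b^3*c^2 + a^2*b*c^3)*b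
     = a^4*b^2*c + a^3*b^2*c^2 + a^2*b^3*c^2 + a*b^4*c^2 + a^2*b^2*c^3 + a^2*b*c^4"
proof -
  have "(c^4*a^2*b + (a^2*b*c + a*b^2*c + a*b*c^2)*a^2*b + (a^3*b^2*c + a^2*b^2*c^2 + a*b^3*c^2 + a^2*b*c^3)*b) + (a^4*b^2*c + a^3*b^2*c^2 + a^2*b^3*c^2 + a*b^4*c^2 + a^2*b^2*c^3 + a^2*b*c^4) = 2 * (a*b^4*c^2 + a^2*b*c^4 + a^2*b^2*c^3 + a^2*b^3*c^2 + a^3*b^2*c^2 + a^3*b^3*c + a^4*b^2*c)"
    by algebra
  then have "(c^4*a^2*b + (a^2*b*c + a*b^2*c + a*b*c^2)*a^2*b + (a^3*b^2*c + a^2*b^2*c^2 + a*b^3*c^2 + a^2*b*c^3)*b) + (a^4*b^2*c + a^3*b^2*c^2 + a^2*b^3*c^2 + a*b^4*c^2 + a^2*b^2*c^3 + a^2*b*c^4) = 0"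
    by (simp only: two_poly mult_zero_left)
  then show ?thesis by (rule poly_neg_eq)
qed

lemma poly_id2: fixes a b c :: "bit poly" shows "a^4*b^2*c + (a^2*b*c + a*b^2*c + a*b*c^2)*b^2*c + (a^3*b^2*c + a^2*b^2*c^2 + a*b^3*c^2 + a^2*b*c^3)*c
     = a^4*b^2*c + a^3*b^2*c^2 + a^2*b^3*c^2 + a*b^4*c^2 + a^2*b^2*c^3 + a^2*b*c^4"
proof -
  have "(a^4*b^2*c + (a^2*b*c + a*b^2*c + a*b*c^2)*b^2*c + (a^3*b^2*c + a^2*b^2*c^2 + a*b^3*c^2 + a^2*b*c^3)*c) + (a^4*b^2*c + a^3*b^2*c^2 + a^2*b^3*c^2 + a*b^4*c^2 + a^2*b^2*c^3 + a^2*b*c^4) = 2 * (a*b^3*c^3 + a*b^4*c^2 + a^2*b*c^4 + a^2*b^2*c^3 + a^2*b^3*c^2 + a^3*b^2*c^2 + a^4*b^2*c)"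
    by algebra
  then have "(a^4*b^2*c + (a^2*b*c + a*b^2*c + a*b*c^2)*b^2*c + (a^3*b^2*c + a^2*b^2*c^2 + a*b^3*c^2 + a^2*b*c^3)*c) + (a^4*b^2*c + a^3*b^2*c^2 + a^2*b^3*c^2 + a*b^4*c^2 + a^2*b^2*c^3 + a^2*b*c^4) = 0"
    by (simp only: two_poly mult_zero_left)
  then show ?thesis by (rule poly_neg_eq)
qed

lemma poly_id3: fixes a b c :: "bit poly" shows "b^4*c^2*a + (a^2*b*c + a*b^2*c + a*b*c^2)*c^2*a + (a^3*b^2*c + a^2*b^2*c^2 + a*b^3*c^2 + a^2*b*c^3)*a
     = a^4*b^2*c + a^3*b^2*c^2 + a^2*b^3*c^2 + a*b^4*c^2 + a^2*b^2*c^3 + a^2*b*c^4"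
proof -
  have "(b^4*c^2*a + (a^2*b*c + a*b^2*c + a*b*c^2)*c^2*a + (a^3*b^2*c + a^2*b^2*c^2 + a*b^3*c^2 + a^2*b*c^3)*a) + (a^4*b^2*c + a^3*b^2*c^2 + a^2*b^3*c^2 + a*b^4*c^2 + a^2*b^2*c^3 + a^2*b*c^4) = 2 * (a*b^4*c^2 + a^2*b*c^4 + a^2*b^2*c^3 + a^2*b^3*c^2 + a^3*b*c^3 + a^3*b^2*c^2 + a^4*b^2*c)"
    by algebra
  then have "(b^4*c^2*a + (a^2*b*c + a*b^2*c + a*b*c^2)*c^2*a + (a^3*b^2*c + a^2*b^2*c^2 + a*b^3*c^2 + a^2*b*c^3)*a) + (a^4*b^2*c + a^3*b^2*c^2 + a^2*b^3*c^2 + a*b^4*c^2 + a^2*b^2*c^3 + a^2*b*c^4) = 0"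
    by (simp only: two_poly mult_zero_left)
  then show ?thesis by (rule poly_neg_eq)
qed

lemma sd_ge_mult_K: "sd_ge x (-K) \<Longrightarrow> sd_ge y k \<Longrightarrow> sd_ge (x*y) (k - K)"
  using sd_ge_mult[of x "-K" y k] by simp


lemma fls_eq_of_add0: "(x::bit fls) + y = 0 \<Longrightarrow> x = y"
  by (metis add_right_cancel fls_add_self)

theorem mainTheorem5:
  fixes a b c :: "bit poly"
  assumes "degree a > 0" and "degree b > 0" and "degree c > 0"
  defines "eps \<equiv> (\<lambda>n::nat. if n mod 3 = 0 then a else if n mod 3 = 1 then b else c)"
  defines "A \<equiv> a^3*b^2*c + a^2*b^2*c^2 + a*b^3*c^2 + b^4*c^2 + a*b^2*c^3 + a*b*c^4
                + a^2*b*c + a*b^2*c + a*b*c^2 + c^4 + 1"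
  defines "B0 \<equiv> a^4*b^2*c + a^3*b^2*c^2 + a^2*b^3*c^2 + a*b^4*c^2 + a^2*b^2*c^3 + a^2*b*c^4"
  defines "B1 \<equiv> a^3*b^2*c + a^2*b^2*c^2 + a*b^3*c^2 + a^2*b*c^3"
  defines "B2 \<equiv> a^2*b*c + a*b^2*c + a*b*c^2"
  defines "\<beta> \<equiv> 1 / CF (\<lambda>i. tpoly_to_fls (sword eps i))"
  shows "convergent (convergents (\<lambda>i. tpoly_to_fls (sword eps i))) \<and>
         \<beta>^8 = tpoly_to_fls A + tpoly_to_fls B0 * \<beta> + tpoly_to_fls B1 * \<beta>^2
                + tpoly_to_fls B2 * \<beta>^4"
proof -
  have pos: "\<And>n. degree (eps n) > 0" using assms(1-3) unfolding eps_def by auto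
  have per: "\<And>n. eps (n+3) = eps n" unfolding eps_def by simp
  have epsnz: "\<And>n. eps n \<noteq> 0" using pos by (metis degree_0 less_irrefl)
  define s where "s = (\<lambda>i. phi (sword eps i))"
  have diff: "\<And>n. sd_ge (convergents s (Suc n) - convergents s n) (int n)"
    unfolding s_def by (rule conv_diff[OF pos])
  obtain L where Lim: "convergents s \<longlonglongrightarrow> L" and sdL: "\<And>n. sd_ge (L - convergents s n) (int n)"
    using fls_conv[OF diff] by blast
  have conv: "convergent (convergents s)" using Lim by (rule convergentI)
  have CFL: "CF s = L" unfolding CF_def using Lim by (rule limI)
  have beta: "\<beta> = inverse L" unfolding \<beta>_def s_def[symmetric] CFL by (simp add: inverse_eq_divide)
  have sw0: "sword eps 0 = a" by (simp add: sword_def eps_def)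
  have c0: "convergents s 0 = phi a"
  proof -
    have "mat (map (sword eps) [0..<Suc 0]) = (a,1,1,0)" by (simp add: sw0)
    then have "convergents s 0 = phi a / phi 1" unfolding s_def by (rule conv_mat[OF pos])
    then show ?thesis by (simp add: phi_1)
  qed
  have a0: "a \<noteq> 0" using assms(1) by auto
  have da: "fls_subdegree (phi a) = - int (degree a)" using phi_subdeg[OF a0] .
  have pa0: "phi a \<noteq> 0" using a0 by (simp add: phi_eq0)
  have dlt: "fls_subdegree (phi a) < 0" using da assms(1) by simp
  have subL: "fls_subdegree L = - int (degree a)"
  proof -
    have "sd_ge (L - phi a) 0" using sdL[of 0] c0 by simp
    then have "fls_subdegree (phi a + (L - phi a)) = fls_subdegree (phi a)"
      using subdeg_add_small pa0 dlt by blast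
    then show ?thesis using da by simp
  qed
  have L0: "L \<noteq> 0" using subL assms(1) by (metis fls_zero_subdegree neg_0_equal_iff_equal of_nat_0_eq_iff less_irrefl)
  have subz: "fls_subdegree (convergents s m) = - int (degree a)" "convergents s m \<noteq> 0" for m
  proof -
    have "sd_ge (convergents s m - phi a) 0" using telescope[OF diff, of 0 m] c0 by simp
    then have "fls_subdegree (phi a + (convergents s m - phi a)) = fls_subdegree (phi a)"
      using subdeg_add_small pa0 dlt by blast
    then show "fls_subdegree (convergents s m) = - int (degree a)" using da by simp
    then show "convergents s m \<noteq> 0" using assms(1)
      by (metis fls_zero_subdegree neg_0_equal_iff_equal of_nat_0_eq_iff less_irrefl)
  qed
  define e where "e n = phi (eps n)" for n
  define P where "P n = phi (fst (pqr eps n))" for n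
  define Q where "Q n = phi (fst (snd (pqr eps n)))" for n
  have per': "\<And>n. e (n+3) = e n" by (simp add: e_def per)
  have enz: "\<And>n. e n \<noteq> 0" by (simp add: e_def phi_eq0 epsnz)
  have P0: "P 0 = 1" and Q0: "Q 0 = 0" by (simp_all add: P_def Q_def phi_1 phi_0)
  have PS: "\<And>n. P (Suc n) = e n * P n ^2"
  proof -
    fix n obtain p q r where "pqr eps n = (p,q,r)" by (cases "pqr eps n") auto
    then show "P (Suc n) = e n * P n ^2" by (simp add: P_def e_def phi_mult phi_power)
  qed
  have QS: "\<And>n. Q (Suc n) = e n * P n * Q n + 1"
  proof -
    fix n obtain p q r where "pqr eps n = (p,q,r)" by (cases "pqr eps n") auto
    then show "Q (Suc n) = e n * P n * Q n + 1" by (simp add: P_def Q_def e_def phi_mult phi_add phi_1)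
  qed
  have identp: "eps(N+2)^4 * eps N^2 * eps(N+1) + B2 * eps N^2 * eps(N+1) + B1 * eps(N+1) = B0" for N
  proof -
    consider "N mod 3 = 0" | "N mod 3 = 1" | "N mod 3 = 2" by linarith
    then show ?thesis
    proof cases
      case 1
      then have m: "(N+1) mod 3 = 1" "(N+2) mod 3 = 2" by presburger+
      have e: "eps N = a" "eps (N+1) = b" "eps (N+2) = c" unfolding eps_def using 1 m by simp_all
      show ?thesis unfolding B0_def B1_def B2_def e by (rule poly_id1)
    next
      case 2
      then have m: "(N+1) mod 3 = 2" "(N+2) mod 3 = 0" by presburger+
      have e: "eps N = b" "eps (N+1) = c" "eps (N+2) = a" unfolding eps_def using 2 m by simp_all
      show ?thesis unfolding B0_def B1_def B2_def e by (rule poly_id2)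
    next
      case 3
      then have m: "(N+1) mod 3 = 0" "(N+2) mod 3 = 1" by presburger+
      have e: "eps N = c" "eps (N+1) = a" "eps (N+2) = b" unfolding eps_def using 3 m by simp_all
      show ?thesis unfolding B0_def B1_def B2_def e by (rule poly_id3)
    qed
  qed
  have ident: "\<And>N. (e(N+2)^4 * e N^2 * e(N+1) + phi B2 * e N^2 * e(N+1)) + phi B1 * e (N+1) = phi B0"
    unfolding e_def by (metis identp phi_add phi_mult phi_power)

  have init: "phi A = phi B0 * inverse (P 1) + (e 2^4 * e 0^2 * e 1 + phi B2 * e 0^2 * e 1) * inverse (P 2)
                   + (e 0^4 * e 1^2 * e 2) * inverse (P 3)"
  proof -
    have e012: "e 0 = phi a" "e 1 = phi b" "e 2 = phi c" by (simp_all add: e_def eps_def)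
    have P1: "P 1 = phi a" using PS[of 0] P0 e012 by simp
    have P2: "P 2 = phi b * phi a^2" using PS[of 1] P1 e012 by (simp add: numeral_2_eq_2)
    have P3: "P 3 = phi c * (phi b * phi a^2)^2" using PS[of 2] P2 e012 by (simp add: numeral_3_eq_3)
    define B0q where "B0q = a^3*b^2*c + a^2*b^2*c^2 + a*b^3*c^2 + b^4*c^2 + a*b^2*c^3 + a*b*c^4"
    have h1: "B0 = a * B0q" unfolding B0_def B0q_def by algebra
    have h2: "A = B0q + c^4 + B2 + 1" unfolding A_def B0q_def B2_def by algebra
    have nz: "phi a \<noteq> 0" "phi b \<noteq> 0" "phi c \<noteq> 0" using enz[of 0] enz[of 1] enz[of 2] e012 by auto
    have "phi A = phi B0q + phi c^4 + phi B2 + 1" unfolding h2 by (simp add: phi_add phi_power phi_1)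
    moreover have "phi B0 = phi a * phi B0q" unfolding h1 by (simp add: phi_mult)
    ultimately show ?thesis unfolding e012 P1 P2 P3 using nz by (simp add: field_simps)
  qed
  have inv: "\<And>N. (Q N / P N)^8 + phi A + phi B0*(Q N / P N) + phi B1*(Q N / P N)^2 + phi B2*(Q N / P N)^4
       = phi B0 * inverse (P (N+1)) + (e(N+2)^4 * e N^2 * e(N+1) + phi B2 * e N^2 * e(N+1)) * inverse (P (N+2))
         + (e N^4 * e(N+1)^2 * e(N+2)) * inverse (P (N+3))"
    by (rule invariant[OF per' enz P0 Q0 PS QS ident init])
  define D where "D = int (degree a + degree b + degree c)"
  define K where "K = 7*D + int (degree B0) + int (degree B1) + int (degree B2) + int (degree A)"
  have D0: "D \<ge> 0" by (simp add: D_def)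
  have K0: "K \<ge> 7*D" "K \<ge> int (degree B0)" "K \<ge> int (degree B1) + 3*D" "K \<ge> int (degree B2) + 3*D"
    using D0 by (simp_all add: K_def)
  have sde: "sd_ge (e n) (-D)" for n
  proof -
    have h: "degree (eps n) \<le> degree a + degree b + degree c" unfolding eps_def by auto
    show ?thesis unfolding e_def D_def using sd_ge_mono[OF sd_ge_phi[of "eps n"]] h by simp
  qed
  have sdB0: "sd_ge (phi B0) (-K)" by (rule sd_ge_mono[OF sd_ge_phi]) (use K0 in simp)
  have sdB1: "sd_ge (phi B1) (-K)" by (rule sd_ge_mono[OF sd_ge_phi]) (use K0 D0 in simp)
  have sdB2: "sd_ge (phi B2) (-K)" by (rule sd_ge_mono[OF sd_ge_phi]) (use K0 D0 in simp)
  have Pnz: "P k \<noteq> 0" for k using pqr_p[of eps k, OF pos] by (simp add: P_def phi_eq0)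
  have sdu: "sd_ge (inverse (P k)) (int k)" for k
  proof -
    have "fls_subdegree (inverse (P k)) = int (degree (fst (pqr eps k)))"
      using pqr_p[of eps k, OF pos] by (simp add: P_def phi_subdeg)
    then have "int k \<le> fls_subdegree (inverse (P k))" using pqr_p[of eps k, OF pos] by simp
    then show ?thesis using sd_ge_mono[OF sd_ge_subdeg] by blast
  qed
  have sdc2: "sd_ge (e(N+2)^4 * e N^2 * e(N+1) + phi B2 * e N^2 * e(N+1)) (-K)" for N
  proof (rule sd_ge_add)
    have "sd_ge (e(N+2)^4 * e N^2 * e(N+1)) (int 4 * (-D) + int 2 * (-D) + (-D))"
      by (intro sd_ge_mult sd_ge_power sde)
    then show "sd_ge (e(N+2)^4 * e N^2 * e(N+1)) (-K)" by (rule sd_ge_mono) (use K0 in simp)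
    have "sd_ge (phi B2 * e N^2 * e(N+1)) (-int (degree B2) + int 2 * (-D) + (-D))"
      by (intro sd_ge_mult sd_ge_power sde sd_ge_phi)
    then show "sd_ge (phi B2 * e N^2 * e(N+1)) (-K)" by (rule sd_ge_mono) (use K0 in simp)
  qed
  have sdc3: "sd_ge (e N^4 * e(N+1)^2 * e(N+2)) (-K)" for N
  proof -
    have "sd_ge (e N^4 * e(N+1)^2 * e(N+2)) (int 4 * (-D) + int 2 * (-D) + (-D))"
      by (intro sd_ge_mult sd_ge_power sde)
    then show ?thesis by (rule sd_ge_mono) (use K0 in simp)
  qed
  have sdE: "sd_ge (phi B0 * inverse (P (N+1)) + (e(N+2)^4 * e N^2 * e(N+1) + phi B2 * e N^2 * e(N+1)) * inverse (P (N+2))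
         + (e N^4 * e(N+1)^2 * e(N+2)) * inverse (P (N+3))) (int N - K)" for N
  proof -
    have 1: "sd_ge (phi B0 * inverse (P (N+1))) (int N - K)"
      using sd_ge_mult_K[OF sdB0 sdu[of "N+1"]] by (rule sd_ge_mono) simp
    have 2: "sd_ge ((e(N+2)^4 * e N^2 * e(N+1) + phi B2 * e N^2 * e(N+1)) * inverse (P (N+2))) (int N - K)"
      using sd_ge_mult_K[OF sdc2 sdu[of "N+2"]] by (rule sd_ge_mono) simp
    have 3: "sd_ge ((e N^4 * e(N+1)^2 * e(N+2)) * inverse (P (N+3))) (int N - K)"
      using sd_ge_mult_K[OF sdc3 sdu[of "N+3"]] by (rule sd_ge_mono) simp
    show ?thesis by (intro sd_ge_add 1 2 3)
  qed
  have Pf_add: "(x + d)^8 + phi A + phi B0*(x + d) + phi B1*(x + d)^2 + phi B2*(x + d)^4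
     = (x^8 + phi A + phi B0*x + phi B1*x^2 + phi B2*x^4) + (d^8 + phi B0*d + phi B1*d^2 + phi B2*d^4)" for x d
    by (simp add: frob frob4 frob8 algebra_simps)
  have key: "sd_ge (\<beta>^8 + phi A + phi B0*\<beta> + phi B1*\<beta>^2 + phi B2*\<beta>^4) (int N - 1 - K)" if N1: "N \<ge> 1" for N
  proof -
    define m :: nat where "m = 2^N - 2"
    have pN: "(2::nat)^N \<ge> 2" using N1 by (metis One_nat_def power_increasing_iff power_one_right one_less_numeral_iff semiring_norm(76) nat_power_less_imp_less not_less)
    have Sm: "Suc m = 2^N - 1" using pN by (simp add: m_def)
    have "N < 2^N" by (rule less_exp)
    then have "N - 1 \<le> m" unfolding m_def by linarith
    then have mN: "int N - 1 \<le> int m" using N1 by linarith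
    obtain p q r where pq: "pqr eps N = (p,q,r)" by (cases "pqr eps N") auto
    have mat: "mat (map (sword eps) [0..<Suc m]) = (p,q,q,r)"
      using mat_W[of eps N] pq map_sword_W[of eps N] Sm by simp
    have zc: "convergents s m = P N / Q N"
      using conv_mat[OF pos mat] pq by (simp add: P_def Q_def s_def)
    define z where "z = convergents s m"
    have z0: "z \<noteq> 0" using subz(2) by (simp add: z_def)
    have bN: "Q N / P N = inverse z" using zc by (simp add: z_def)
    define dd where "dd = \<beta> - Q N / P N"
    have d: "dd = (z - L) * inverse (L * z)"
      unfolding dd_def beta bN using L0 z0 by (simp add: field_simps)
    have sd1: "sd_ge (z - L) (int m)" using sd_ge_uminus[OF sdL[of m]] by (simp add: z_def)
    have sd2: "sd_ge (inverse (L*z)) 0"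
    proof -
      have "fls_subdegree (inverse (L*z)) = 2 * int (degree a)"
        using L0 z0 subL subz(1)[of m] by (simp add: z_def)
      then show ?thesis using sd_ge_mono[OF sd_ge_subdeg] by (metis of_nat_0_le_iff mult_nonneg_nonneg zero_le_numeral)
    qed
    have sdd: "sd_ge dd (int m)" using sd_ge_mult[OF sd1 sd2] d by simp
    have l1: "sd_ge (dd^8) (int m - K)"
      using sd_ge_power[OF sdd, of 8] by (rule sd_ge_mono) (use K0 D0 in simp)
    have l2: "sd_ge (phi B0 * dd) (int m - K)" by (rule sd_ge_mult_K[OF sdB0 sdd])
    have l3: "sd_ge (phi B1 * dd^2) (int m - K)"
      by (rule sd_ge_mult_K[OF sdB1]) (rule sd_ge_mono[OF sd_ge_power[OF sdd, of 2]], simp)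
    have l4: "sd_ge (phi B2 * dd^4) (int m - K)"
      by (rule sd_ge_mult_K[OF sdB2]) (rule sd_ge_mono[OF sd_ge_power[OF sdd, of 4]], simp)
    have lin: "sd_ge (dd^8 + phi B0*dd + phi B1*dd^2 + phi B2*dd^4) (int N - 1 - K)"
      by (rule sd_ge_mono[of _ "int m - K"]) (intro sd_ge_add l1 l2 l3 l4, use mN in simp)
    have bsum: "\<beta> = Q N / P N + dd" by (simp add: dd_def)
    have eq: "\<beta>^8 + phi A + phi B0*\<beta> + phi B1*\<beta>^2 + phi B2*\<beta>^4
       = ((Q N / P N)^8 + phi A + phi B0*(Q N / P N) + phi B1*(Q N / P N)^2 + phi B2*(Q N / P N)^4)
         + (dd^8 + phi B0*dd + phi B1*dd^2 + phi B2*dd^4)"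
      unfolding bsum by (rule Pf_add)
    have s1: "sd_ge ((Q N / P N)^8 + phi A + phi B0*(Q N / P N) + phi B1*(Q N / P N)^2 + phi B2*(Q N / P N)^4) (int N - 1 - K)"
      unfolding inv by (rule sd_ge_mono[OF sdE]) simp
    show ?thesis unfolding eq by (rule sd_ge_add[OF s1 lin])
  qed
  have zero: "\<beta>^8 + phi A + phi B0*\<beta> + phi B1*\<beta>^2 + phi B2*\<beta>^4 = 0"
  proof (rule sd_ge_all)
    fix k
    define N where "N = nat (k + K + 1) + 1"
    have "sd_ge (\<beta>^8 + phi A + phi B0*\<beta> + phi B1*\<beta>^2 + phi B2*\<beta>^4) (int N - 1 - K)"
      by (rule key) (simp add: N_def)
    then show "sd_ge (\<beta>^8 + phi A + phi B0*\<beta> + phi B1*\<beta>^2 + phi B2*\<beta>^4) k"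
      by (rule sd_ge_mono) (simp add: N_def)
  qed
  have "\<beta>^8 + (phi A + phi B0*\<beta> + phi B1*\<beta>^2 + phi B2*\<beta>^4) = 0"
    using zero by (simp add: add.assoc)
  then have "\<beta>^8 = phi A + phi B0*\<beta> + phi B1*\<beta>^2 + phi B2*\<beta>^4" by (rule fls_eq_of_add0)
  then show ?thesis using conv by (simp add: s_def)
qed


end
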